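(* Let $K$ be a field and let $f\colon\mathbb Z^k\to K$ be a hypergeometric term on $\mathbb Z^k$ that is not a zero divisor. Then for any finite sequence $\vec w_1,\dots,\vec w_n$ of vectors in $\mathbb Z^k$, the hypergeometric term $f^{\vec w_1}f^{\vec w_2}\cdots f^{\vec w_n}$ (pointwise product) is not a zero divisor.
   Context: $f^{\vec w}(\vec z)=f(\vec z+\vec w)$. A hypergeometric term on $\mathbb Z^k$ over $K$ is a function $f\colon\mathbb Z^k\to K$ such that for each $i\in\{1,\dots,k\}$ there are nonzero polynomials $A_i,B_i\in K[\vec z]$ with $A_i(\vec z)f(\vec z)=B_i(\vec z)f(\vec z+\vec e_i)$ for all $\vec z\in\mathbb Z^k$. A function $g\colon\mathbb Z^k\to K$ is a zero divisor if there is a nonzero polynomial $p$ with $p(\vec z)g(\vec z)=0$ for all $\vec z\in\mathbb Z^k$. *)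

theory Defs
  imports "HOL-Analysis.Analysis" "HOL-Library.Poly_Mapping"
begin

text \<open>Multivariate polynomials over K in the variables indexed by the finite type 'k,
  represented as finitely supported maps from monomials (exponent vectors) to coefficients.\<close>
type_synonym ('k, 'a) mpoly = "('k \<Rightarrow>\<^sub>0 nat) \<Rightarrow>\<^sub>0 'a"

definition mpoly_eval :: "('k::finite, 'a::field) mpoly \<Rightarrow> int ^ 'k \<Rightarrow> 'a" where
  "mpoly_eval p z =
     (\<Sum>mon::('k \<Rightarrow>\<^sub>0 nat)\<in>Poly_Mapping.keys p. Poly_Mapping.lookup p mon * (\<Prod>i\<in>Poly_Mapping.keys mon. (of_int (z $ i) :: 'a) ^ (Poly_Mapping.lookup mon i :: nat)))"

definition unit_vec :: "'k::finite \<Rightarrow> int ^ 'k" where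
  "unit_vec i = (\<chi> j. if j = i then 1 else 0)"

definition hypergeometric_term :: "(int ^ 'k::finite \<Rightarrow> 'a::field) \<Rightarrow> bool" where
  "hypergeometric_term f \<longleftrightarrow>
     (\<forall>i. \<exists>A B :: ('k, 'a) mpoly. A \<noteq> 0 \<and> B \<noteq> 0 \<and>
        (\<forall>z. mpoly_eval A z * f z = mpoly_eval B z * f (z + unit_vec i)))"

definition zero_divisor :: "(int ^ 'k::finite \<Rightarrow> 'a::field) \<Rightarrow> bool" where
  "zero_divisor g \<longleftrightarrow> (\<exists>p :: ('k, 'a) mpoly. p \<noteq> 0 \<and> (\<forall>z. mpoly_eval p z * g z = 0))"

end

theory Submission
  imports Defs
begin

definition mon :: "('k::finite \<Rightarrow>\<^sub>0 nat) \<Rightarrow> int ^ 'k \<Rightarrow> 'a::field" where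
  "mon m z = (\<Prod>i\<in>Poly_Mapping.keys m. (of_int (z $ i) :: 'a) ^ Poly_Mapping.lookup m i)"

lemma mon_UNIV: "mon m z = (\<Prod>i\<in>UNIV. (of_int (z $ i) :: 'a::field) ^ Poly_Mapping.lookup m i)"
  unfolding mon_def
  by (rule prod.mono_neutral_left) (auto simp: in_keys_iff)

lemma mon_add: "(mon (a + b) z :: 'a::field) = mon a z * mon b z"
  unfolding mon_UNIV by (simp add: lookup_add power_add prod.distrib)

lemma eval_superset:
  assumes "finite S" "Poly_Mapping.keys p \<subseteq> S"
  shows "mpoly_eval p z = (\<Sum>m\<in>S. Poly_Mapping.lookup p m * mon m z)"
  unfolding mpoly_eval_def mon_def[symmetric]
  by (rule sum.mono_neutral_left) (use assms in \<open>auto simp: in_keys_iff\<close>)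

lemma eval_add: "mpoly_eval (p + q) z = mpoly_eval p z + mpoly_eval q z"
proof -
  let ?S = "Poly_Mapping.keys p \<union> Poly_Mapping.keys q"
  have "mpoly_eval (p + q) z = (\<Sum>m\<in>?S. Poly_Mapping.lookup (p+q) m * mon m z)"
    by (rule eval_superset) (auto dest: set_mp[OF keys_add])
  also have "\<dots> = (\<Sum>m\<in>?S. Poly_Mapping.lookup p m * mon m z) + (\<Sum>m\<in>?S. Poly_Mapping.lookup q m * mon m z)"
    by (simp add: lookup_add distrib_right sum.distrib)
  also have "\<dots> = mpoly_eval p z + mpoly_eval q z"
    using eval_superset[of ?S p z] eval_superset[of ?S q z] by simp
  finally show ?thesis .
qed

lemma lookup_mult_fin:
  fixes p q :: "('k::finite, 'a::field) mpoly"
  shows "Poly_Mapping.lookup (p * q) k =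
    (\<Sum>(a,b)\<in>Poly_Mapping.keys p \<times> Poly_Mapping.keys q. (Poly_Mapping.lookup p a * Poly_Mapping.lookup q b when k = a + b))"
proof -
  have "Poly_Mapping.lookup (p * q) k = prod_fun (Poly_Mapping.lookup p) (Poly_Mapping.lookup q) k"
    by (simp add: times_poly_mapping.rep_eq)
  also have "\<dots> = (\<Sum>(a, b). Poly_Mapping.lookup p a * Poly_Mapping.lookup q b when k = a + b)"
    by (rule prod_fun_unfold_prod) auto
  also have "\<dots> = (\<Sum>(a,b)\<in>Poly_Mapping.keys p \<times> Poly_Mapping.keys q. (Poly_Mapping.lookup p a * Poly_Mapping.lookup q b when k = a + b))"
    by (rule Sum_any.expand_superset) (auto simp: in_keys_iff when_def split: if_splits)
  finally show ?thesis .
qed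

lemma eval_mult:
  fixes p q :: "('k::finite, 'a::field) mpoly"
  shows "mpoly_eval (p * q) z = mpoly_eval p z * mpoly_eval q z"
proof -
  let ?K = "Poly_Mapping.keys p" and ?L = "Poly_Mapping.keys q"
  let ?S = "(\<lambda>(a,b). a + b) ` (?K \<times> ?L)"
  let ?lp = "Poly_Mapping.lookup p" and ?lq = "Poly_Mapping.lookup q"
  have fS: "finite ?S" by auto
  have "mpoly_eval (p * q) z = (\<Sum>k\<in>?S. Poly_Mapping.lookup (p*q) k * mon k z)"
    by (rule eval_superset[OF fS]) (use keys_mult in fastforce)
  also have "\<dots> = (\<Sum>k\<in>?S. \<Sum>(a,b)\<in>?K \<times> ?L. (?lp a * ?lq b * mon k z when k = a + b))"
    by (simp add: lookup_mult_fin sum_distrib_right when_mult case_prod_beta)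
  also have "\<dots> = (\<Sum>(a,b)\<in>?K \<times> ?L. \<Sum>k\<in>?S. (?lp a * ?lq b * mon k z when k = a + b))"
    unfolding case_prod_beta by (rule sum.swap)
  also have "\<dots> = (\<Sum>(a,b)\<in>?K \<times> ?L. ?lp a * ?lq b * mon (a + b) z)"
  proof (rule sum.cong[OF refl], clarify)
    fix a b assume ab: "a \<in> ?K" "b \<in> ?L"
    have "(\<Sum>k\<in>?S. (?lp a * ?lq b * mon k z when k = a + b)) = (\<Sum>k\<in>?S. if k = a + b then ?lp a * ?lq b * mon k z else 0)"
      by (simp add: when_def)
    also have "\<dots> = ?lp a * ?lq b * mon (a + b) z"
      using ab by (subst sum.delta[OF fS]) auto
    finally show "(\<Sum>k\<in>?S. (?lp a * ?lq b * mon k z when k = a + b)) = ?lp a * ?lq b * mon (a + b) z" .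
  qed
  also have "\<dots> = (\<Sum>a\<in>?K. \<Sum>b\<in>?L. (?lp a * mon a z) * (?lq b * mon b z))"
    by (simp add: sum.cartesian_product mon_add mult_ac)
  also have "\<dots> = mpoly_eval p z * mpoly_eval q z"
    by (simp add: mpoly_eval_def mon_def[symmetric] sum_product)
  finally show ?thesis .
qed

definition phk :: "('k::finite \<Rightarrow>\<^sub>0 nat) \<Rightarrow> (nat \<Rightarrow>\<^sub>0 nat)" where
  "phk m = Abs_poly_mapping (\<lambda>j. if j \<in> to_nat ` (UNIV :: 'k set) then Poly_Mapping.lookup m (from_nat j) else 0)"


lemma lookup_phk: "Poly_Mapping.lookup (phk (m::'k::finite \<Rightarrow>\<^sub>0 nat)) j = (if j \<in> to_nat ` (UNIV :: 'k set) then Poly_Mapping.lookup m (from_nat j) else 0)"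
proof -
  have "finite {j. (if j \<in> to_nat ` (UNIV :: 'k set) then Poly_Mapping.lookup m (from_nat j) else 0) \<noteq> 0}"
    by (rule finite_subset[of _ "to_nat ` (UNIV :: 'k set)"]) auto
  then show ?thesis unfolding phk_def by simp
qed

lemma phi_add: "phk (a + b) = phk a + phk b"
  by (rule poly_mapping_eqI) (simp add: lookup_phk lookup_add)

lemma phi_inj: "phk a = phk b \<Longrightarrow> a = (b::'k::finite \<Rightarrow>\<^sub>0 nat)"
proof (rule poly_mapping_eqI)
  fix i :: 'k
  assume "phk a = phk b"
  then have "Poly_Mapping.lookup (phk a) (to_nat i) = Poly_Mapping.lookup (phk b) (to_nat i)" by simp
  then show "Poly_Mapping.lookup a i = Poly_Mapping.lookup b i" by (simp add: lookup_phk)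
qed

lemma max_phk:
  fixes K :: "('k::finite \<Rightarrow>\<^sub>0 nat) set"
  assumes "finite K" "K \<noteq> {}"
  obtains a where "a \<in> K" "\<And>x. x \<in> K \<Longrightarrow> phk x \<le> phk a"
proof -
  have "Max (phk ` K) \<in> phk ` K" using assms by simp
  then obtain a where "a \<in> K" "phk a = Max (phk ` K)" by auto
  moreover have "\<And>x. x \<in> K \<Longrightarrow> phk x \<le> Max (phk ` K)" using assms by simp
  ultimately show ?thesis using that by metis
qed

lemma mult_nonzero:
  fixes p q :: "('k::finite, 'a::field) mpoly"
  assumes "p \<noteq> 0" "q \<noteq> 0"
  shows "p * q \<noteq> 0"
proof -
  let ?K = "Poly_Mapping.keys p" and ?L = "Poly_Mapping.keys q"
  let ?lp = "Poly_Mapping.lookup p" and ?lq = "Poly_Mapping.lookup q"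
  have "?K \<noteq> {}" "?L \<noteq> {}" using assms by auto
  obtain a0 where a0: "a0 \<in> ?K" "\<And>x. x \<in> ?K \<Longrightarrow> phk x \<le> phk a0"
    using max_phk[of ?K] \<open>?K \<noteq> {}\<close> by auto
  obtain b0 where b0: "b0 \<in> ?L" "\<And>x. x \<in> ?L \<Longrightarrow> phk x \<le> phk b0"
    using max_phk[of ?L] \<open>?L \<noteq> {}\<close> by auto
  have uniq: "a = a0 \<and> b = b0" if "a \<in> ?K" "b \<in> ?L" "a0 + b0 = a + b" for a b
  proof -
    have le: "phk a \<le> phk a0" "phk b \<le> phk b0" using a0 b0 that by auto
    have eq: "phk a0 + phk b0 = phk a + phk b" using that(3) by (metis phi_add)
    have "phk a = phk a0"
    proof (rule ccontr)
      assume "phk a \<noteq> phk a0"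
      then have "phk a < phk a0" using le by simp
      then have "phk a + phk b < phk a0 + phk b0" using le(2) by (rule add_less_le_mono)
      then show False using eq by simp
    qed
    moreover have "phk b = phk b0"
    proof (rule ccontr)
      assume "phk b \<noteq> phk b0"
      then have "phk b < phk b0" using le by simp
      then have "phk a + phk b < phk a0 + phk b0" using le(1) by (simp add: add_le_less_mono)
      then show False using eq by simp
    qed
    ultimately show ?thesis by (auto dest: phi_inj)
  qed
  have "Poly_Mapping.lookup (p * q) (a0 + b0) =
    (\<Sum>(a,b)\<in>?K \<times> ?L. (?lp a * ?lq b when a0 + b0 = a + b))"
    by (rule lookup_mult_fin)
  also have "\<dots> = (\<Sum>ab\<in>?K \<times> ?L. if ab = (a0, b0) then ?lp a0 * ?lq b0 else 0)"
    by (rule sum.cong[OF refl]) (use uniq in \<open>fastforce simp: when_def split: if_splits\<close>)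
  also have "\<dots> = ?lp a0 * ?lq b0"
    using a0(1) b0(1) by (simp add: sum.delta'[of "?K \<times> ?L"])
  also have "\<dots> \<noteq> 0" using a0 b0 by (simp add: in_keys_iff)
  finally show ?thesis by auto
qed

definition pf :: "(int ^ 'k::finite \<Rightarrow> 'a::field) \<Rightarrow> bool" where
  "pf h \<longleftrightarrow> (\<exists>p :: ('k, 'a) mpoly. h = mpoly_eval p)"

definition nzpf :: "(int ^ 'k::finite \<Rightarrow> 'a::field) \<Rightarrow> bool" where
  "nzpf h \<longleftrightarrow> (\<exists>p :: ('k, 'a) mpoly. p \<noteq> 0 \<and> h = mpoly_eval p)"

lemma eval_const: "mpoly_eval (Poly_Mapping.single 0 c :: ('k::finite,'a::field) mpoly) z = c"
  by (simp add: mpoly_eval_def)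

lemma eval_var: "mpoly_eval (Poly_Mapping.single (Poly_Mapping.single i 1) 1 :: ('k::finite,'a::field) mpoly) z = of_int (z $ i)"
  by (simp add: mpoly_eval_def)

lemma pf_const: "pf (\<lambda>z. c)"
  unfolding pf_def by (rule exI[of _ "Poly_Mapping.single 0 c"]) (simp add: eval_const fun_eq_iff)

lemma pf_var: "pf (\<lambda>z. (of_int (z $ i) :: 'a::field))"
  unfolding pf_def by (rule exI[of _ "Poly_Mapping.single (Poly_Mapping.single i 1) 1"]) (rule ext, rule eval_var[symmetric])

lemma pf_add: assumes "pf g" "pf h" shows "pf (\<lambda>z. g z + h z)"
proof -
  obtain p q where "g = mpoly_eval p" "h = mpoly_eval q" using assms unfolding pf_def by blast
  then have "(\<lambda>z. g z + h z) = mpoly_eval (p + q)" by (simp add: fun_eq_iff eval_add)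
  then show ?thesis unfolding pf_def by blast
qed

lemma pf_mult: assumes "pf g" "pf h" shows "pf (\<lambda>z. g z * h z)"
proof -
  obtain p q where "g = mpoly_eval p" "h = mpoly_eval q" using assms unfolding pf_def by blast
  then have "(\<lambda>z. g z * h z) = mpoly_eval (p * q)" by (simp add: fun_eq_iff eval_mult)
  then show ?thesis unfolding pf_def by blast
qed

lemma pf_sum: "finite A \<Longrightarrow> (\<And>x. x \<in> A \<Longrightarrow> pf (g x)) \<Longrightarrow> pf (\<lambda>z. \<Sum>x\<in>A. g x z)"
  by (induction A rule: finite_induct) (auto intro: pf_add pf_const)

lemma pf_prod: "finite A \<Longrightarrow> (\<And>x. x \<in> A \<Longrightarrow> pf (g x)) \<Longrightarrow> pf (\<lambda>z. \<Prod>x\<in>A. g x z)"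
  by (induction A rule: finite_induct) (auto intro: pf_mult pf_const)

lemma pf_power: "pf g \<Longrightarrow> pf (\<lambda>z. g z ^ n)"
  by (induction n) (auto intro: pf_mult pf_const)

lemma pf_shift:
  fixes p :: "('k::finite, 'a::field) mpoly"
  shows "pf (\<lambda>z. mpoly_eval p (z + c))"
proof -
  have "pf (\<lambda>z. \<Sum>m\<in>Poly_Mapping.keys p. Poly_Mapping.lookup p m *
     (\<Prod>i\<in>Poly_Mapping.keys m. ((of_int (z $ i) :: 'a) + of_int (c $ i)) ^ Poly_Mapping.lookup m i))"
    by (intro pf_sum pf_mult pf_const pf_prod pf_power pf_add pf_var) auto
  then show ?thesis by (simp add: mpoly_eval_def)
qed

lemma nzpf_one: "nzpf (\<lambda>z. 1 :: 'a::field)"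
  unfolding nzpf_def
  by (rule exI[of _ "1"]) (simp add: mpoly_eval_def fun_eq_iff)

lemma nzpf_mult: assumes "nzpf g" "nzpf h" shows "nzpf (\<lambda>z. g z * h z)"
proof -
  obtain p q where "p \<noteq> 0" "q \<noteq> 0" "g = mpoly_eval p" "h = mpoly_eval q" using assms unfolding nzpf_def by blast
  moreover have "p * q \<noteq> 0" using calculation by (simp add: mult_nonzero)
  ultimately have "p * q \<noteq> 0 \<and> (\<lambda>z. g z * h z) = mpoly_eval (p * q)" by (simp add: fun_eq_iff eval_mult)
  then show ?thesis unfolding nzpf_def by blast
qed

lemma nzpf_shift:
  fixes h :: "int ^ 'k::finite \<Rightarrow> 'a::field"
  assumes H: "\<And>p :: ('k, 'a) mpoly. p \<noteq> 0 \<Longrightarrow> \<exists>z. mpoly_eval p z \<noteq> 0"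
    and "nzpf h"
  shows "nzpf (\<lambda>z. h (z + c))"
proof -
  obtain p :: "('k, 'a) mpoly" where p: "p \<noteq> 0" "h = mpoly_eval p" using assms(2) unfolding nzpf_def by auto
  obtain q :: "('k, 'a) mpoly" where q: "(\<lambda>z. mpoly_eval p (z + c)) = mpoly_eval q"
    using pf_shift[of p c] unfolding pf_def by auto
  have "q \<noteq> 0"
  proof
    assume "q = 0"
    then have "\<forall>z. mpoly_eval p (z + c) = 0" using q by (simp add: fun_eq_iff mpoly_eval_def)
    then have "mpoly_eval p z = 0" for z by (metis diff_add_cancel)
    then show False using H[OF p(1)] by auto
  qed
  then show ?thesis unfolding nzpf_def using p q by auto
qed

lemma nzpf_eval: "(A :: ('k::finite,'a::field) mpoly) \<noteq> 0 \<Longrightarrow> nzpf (mpoly_eval A)"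
  unfolding nzpf_def by blast

lemma step_up:
  fixes f :: "int ^ 'k::finite \<Rightarrow> 'a::field"
  assumes H: "\<And>p :: ('k, 'a) mpoly. p \<noteq> 0 \<Longrightarrow> \<exists>z. mpoly_eval p z \<noteq> 0"
    and AB: "\<forall>z. mpoly_eval A z * f z = mpoly_eval B z * f (z + unit_vec i)" "(A :: ('k,'a) mpoly) \<noteq> 0"
    and C: "nzpf (P :: int ^ 'k \<Rightarrow> 'a)" "\<forall>z. P z \<noteq> 0 \<and> f z \<noteq> 0 \<longrightarrow> f (z + w) \<noteq> 0"
  shows "\<exists>P' :: int ^ 'k \<Rightarrow> 'a. nzpf P' \<and> (\<forall>z. P' z \<noteq> 0 \<and> f z \<noteq> 0 \<longrightarrow> f (z + (w + unit_vec i)) \<noteq> 0)"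
proof -
  have 1: "nzpf (\<lambda>z. P z * mpoly_eval A (z + w))"
    by (rule nzpf_mult[OF C(1) nzpf_shift[OF H nzpf_eval[OF AB(2)]]])
  have 2: "f (z + (w + unit_vec i)) \<noteq> 0" if "P z * mpoly_eval A (z + w) \<noteq> 0 \<and> f z \<noteq> 0" for z
  proof -
    have "mpoly_eval A (z + w) * f (z + w) \<noteq> 0" using C(2) that by auto
    then have "mpoly_eval B (z + w) * f (z + w + unit_vec i) \<noteq> 0" using AB(1) by metis
    then show "f (z + (w + unit_vec i)) \<noteq> 0" by (simp add: add.assoc)
  qed
  show ?thesis using 1 2 by blast
qed

lemma step_down:
  fixes f :: "int ^ 'k::finite \<Rightarrow> 'a::field"
  assumes H: "\<And>p :: ('k, 'a) mpoly. p \<noteq> 0 \<Longrightarrow> \<exists>z. mpoly_eval p z \<noteq> 0"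
    and AB: "\<forall>z. mpoly_eval A z * f z = mpoly_eval B z * f (z + unit_vec i)" "(B :: ('k,'a) mpoly) \<noteq> 0"
    and C: "nzpf (P :: int ^ 'k \<Rightarrow> 'a)" "\<forall>z. P z \<noteq> 0 \<and> f z \<noteq> 0 \<longrightarrow> f (z + w) \<noteq> 0"
  shows "\<exists>P' :: int ^ 'k \<Rightarrow> 'a. nzpf P' \<and> (\<forall>z. P' z \<noteq> 0 \<and> f z \<noteq> 0 \<longrightarrow> f (z + (w - unit_vec i)) \<noteq> 0)"
proof -
  have 1: "nzpf (\<lambda>z. P z * mpoly_eval B (z + (w - unit_vec i)))"
    by (rule nzpf_mult[OF C(1) nzpf_shift[OF H nzpf_eval[OF AB(2)]]])
  have 2: "f (z + (w - unit_vec i)) \<noteq> 0" if a: "P z * mpoly_eval B (z + (w - unit_vec i)) \<noteq> 0 \<and> f z \<noteq> 0" for z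
  proof -
    let ?y = "z + (w - unit_vec i)"
    have e: "?y + unit_vec i = z + w" by simp
    have "mpoly_eval B ?y * f (?y + unit_vec i) \<noteq> 0" using C(2) a e by auto
    then have "mpoly_eval A ?y * f ?y \<noteq> 0" using AB(1) by metis
    then show "f ?y \<noteq> 0" by auto
  qed
  show ?thesis using 1 2 by blast
qed

definition wsize :: "int ^ 'k::finite \<Rightarrow> nat" where
  "wsize w = (\<Sum>i\<in>UNIV. nat \<bar>w $ i\<bar>)"

lemma wsize_zero: "wsize w = 0 \<Longrightarrow> w = 0"
  unfolding wsize_def by (simp add: vec_eq_iff)

lemma wsize_step:
  fixes w w' :: "int ^ 'k::finite"
  assumes a: "\<And>j. j \<noteq> i \<Longrightarrow> w' $ j = w $ j" and b: "\<bar>w' $ i\<bar> < \<bar>w $ i\<bar>"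
  shows "wsize w' < wsize w"
proof -
  have "wsize w' = nat \<bar>w' $ i\<bar> + (\<Sum>j\<in>UNIV - {i}. nat \<bar>w' $ j\<bar>)"
    unfolding wsize_def by (simp add: sum.remove)
  also have "(\<Sum>j\<in>UNIV - {i}. nat \<bar>w' $ j\<bar>) = (\<Sum>j\<in>UNIV - {i}. nat \<bar>w $ j\<bar>)"
    by (rule sum.cong) (auto simp: a)
  also have "nat \<bar>w' $ i\<bar> + (\<Sum>j\<in>UNIV - {i}. nat \<bar>w $ j\<bar>) < nat \<bar>w $ i\<bar> + (\<Sum>j\<in>UNIV - {i}. nat \<bar>w $ j\<bar>)"
    using b by simp
  also have "\<dots> = wsize w"
    unfolding wsize_def by (simp add: sum.remove)
  finally show ?thesis .
qed

lemma C_all: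
  fixes f :: "int ^ 'k::finite \<Rightarrow> 'a::field"
  assumes H: "\<And>p :: ('k, 'a) mpoly. p \<noteq> 0 \<Longrightarrow> \<exists>z. mpoly_eval p z \<noteq> 0"
    and hyp: "\<forall>i. \<exists>A B :: ('k, 'a) mpoly. A \<noteq> 0 \<and> B \<noteq> 0 \<and>
        (\<forall>z. mpoly_eval A z * f z = mpoly_eval B z * f (z + unit_vec i))"
  shows "\<exists>P :: int ^ 'k \<Rightarrow> 'a. nzpf P \<and> (\<forall>z. P z \<noteq> 0 \<and> f z \<noteq> 0 \<longrightarrow> f (z + w) \<noteq> 0)"
proof (induction "wsize w" arbitrary: w rule: less_induct)
  case less
  show ?case
  proof (cases "w = 0")
    case True
    then show ?thesis using nzpf_one by auto
  next
    case False
    then obtain i where i: "w $ i \<noteq> 0" by (auto simp: vec_eq_iff)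
    obtain A B :: "('k, 'a) mpoly" where AB: "A \<noteq> 0" "B \<noteq> 0"
      "\<forall>z. mpoly_eval A z * f z = mpoly_eval B z * f (z + unit_vec i)"
      using hyp by blast
    show ?thesis
    proof (cases "w $ i > 0")
      case True
      let ?w' = "w - unit_vec i"
      have "wsize ?w' < wsize w"
        by (rule wsize_step[of i]) (use True in \<open>auto simp: unit_vec_def\<close>)
      then obtain P :: "int ^ 'k \<Rightarrow> 'a" where P: "nzpf P" "\<forall>z. P z \<noteq> 0 \<and> f z \<noteq> 0 \<longrightarrow> f (z + ?w') \<noteq> 0"
        using less by blast
      from step_up[OF H AB(3) AB(1) P] show ?thesis by simp
    next
      case False
      let ?w' = "w + unit_vec i"
      have "wsize ?w' < wsize w"
        by (rule wsize_step[of i]) (use False i in \<open>auto simp: unit_vec_def\<close>)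
      then obtain P :: "int ^ 'k \<Rightarrow> 'a" where P: "nzpf P" "\<forall>z. P z \<noteq> 0 \<and> f z \<noteq> 0 \<longrightarrow> f (z + ?w') \<noteq> 0"
        using less by blast
      from step_down[OF H AB(3) AB(2) P] show ?thesis by simp
    qed
  qed
qed

lemma D_all:
  fixes f :: "int ^ 'k::finite \<Rightarrow> 'a::field"
  assumes H: "\<And>p :: ('k, 'a) mpoly. p \<noteq> 0 \<Longrightarrow> \<exists>z. mpoly_eval p z \<noteq> 0"
    and hyp: "\<forall>i. \<exists>A B :: ('k, 'a) mpoly. A \<noteq> 0 \<and> B \<noteq> 0 \<and>
        (\<forall>z. mpoly_eval A z * f z = mpoly_eval B z * f (z + unit_vec i))"
  shows "\<exists>P :: int ^ 'k \<Rightarrow> 'a. nzpf P \<and> (\<forall>z. P z \<noteq> 0 \<and> f z \<noteq> 0 \<longrightarrow> (\<Prod>w\<leftarrow>ws. f (z + w)) \<noteq> 0)"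
proof (induction ws)
  case Nil
  then show ?case using nzpf_one by auto
next
  case (Cons w ws)
  then obtain P :: "int ^ 'k \<Rightarrow> 'a" where P: "nzpf P" "\<forall>z. P z \<noteq> 0 \<and> f z \<noteq> 0 \<longrightarrow> (\<Prod>w\<leftarrow>ws. f (z + w)) \<noteq> 0"
    by blast
  obtain Q :: "int ^ 'k \<Rightarrow> 'a" where Q: "nzpf Q" "\<forall>z. Q z \<noteq> 0 \<and> f z \<noteq> 0 \<longrightarrow> f (z + w) \<noteq> 0"
    using C_all[OF H hyp] by blast
  have "nzpf (\<lambda>z. P z * Q z)" by (rule nzpf_mult[OF P(1) Q(1)])
  moreover have "\<forall>z. P z * Q z \<noteq> 0 \<and> f z \<noteq> 0 \<longrightarrow> (\<Prod>w\<leftarrow>w # ws. f (z + w)) \<noteq> 0"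
    using P(2) Q(2) by simp
  ultimately show ?case by blast
qed

theorem lemmaB16:
  fixes f :: "int ^ 'k::finite \<Rightarrow> 'a::field"
    and ws :: "(int ^ 'k) list"
  assumes "hypergeometric_term f"
    and "\<not> zero_divisor f"
  shows "\<not> zero_divisor (\<lambda>z. \<Prod>w\<leftarrow>ws. f (z + w))"
proof
  have H0: "\<exists>z. mpoly_eval p z * f z \<noteq> 0" if "p \<noteq> 0" for p :: "('k, 'a) mpoly"
    using assms(2) that unfolding zero_divisor_def by blast
  have H: "\<exists>z. mpoly_eval p z \<noteq> 0" if "p \<noteq> 0" for p :: "('k, 'a) mpoly"
    using H0[OF that] by auto
  have hyp: "\<forall>i. \<exists>A B :: ('k, 'a) mpoly. A \<noteq> 0 \<and> B \<noteq> 0 \<and>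
        (\<forall>z. mpoly_eval A z * f z = mpoly_eval B z * f (z + unit_vec i))"
    using assms(1) unfolding hypergeometric_term_def by blast
  obtain P :: "int ^ 'k \<Rightarrow> 'a" where P: "nzpf P" "\<forall>z. P z \<noteq> 0 \<and> f z \<noteq> 0 \<longrightarrow> (\<Prod>w\<leftarrow>ws. f (z + w)) \<noteq> 0"
    using D_all[OF H hyp] by blast
  obtain p :: "('k, 'a) mpoly" where p: "p \<noteq> 0" "P = mpoly_eval p" using P(1) unfolding nzpf_def by blast
  assume "zero_divisor (\<lambda>z. \<Prod>w\<leftarrow>ws. f (z + w))"
  then obtain q :: "('k, 'a) mpoly" where q: "q \<noteq> 0" "\<forall>z. mpoly_eval q z * (\<Prod>w\<leftarrow>ws. f (z + w)) = 0"
    unfolding zero_divisor_def by blast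
  obtain z where z: "mpoly_eval (q * p) z * f z \<noteq> 0" using H0[OF mult_nonzero[OF q(1) p(1)]] by blast
  then have "mpoly_eval q z \<noteq> 0" "P z \<noteq> 0" "f z \<noteq> 0" using p(2) by (auto simp: eval_mult)
  then have "mpoly_eval q z * (\<Prod>w\<leftarrow>ws. f (z + w)) \<noteq> 0" using P(2) by auto
  then show False using q(2) by blast
qed

end
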